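(* Let $G$ be a graph, $\ell\ge 1$, and let $B\subseteq V(G)$ be a mixed $(\ell-1)$-leaky forcing set of $G$. Let $L=L_1\cup L_2\cup L_3$ be a set of $k\ge\ell$ leaks, where $L_1$ is the set of vertex leaks, $L_2$ the set of edge leaks and $L_3$ the set of specified leaks in $L$. Then \[|L_1\setminus B^{[\infty]}_L|+|L_2-B^{[\infty]}_L|+|L_3-B^{[\infty]}_L|\le k-\ell,\] where for $S\subseteq V(G)$, $L_2-S=\{xy\in L_2: x\notin S,\ y\notin S\}$ and $L_3-S=\{x\to y\in L_3: x\notin S\}$.
   Context: All graphs are finite, simple and undirected. Zero forcing: a blue vertex $u$ with exactly one white neighbor $w$ may force $w$ (color it blue), written $u\to w$. A vertex leak is a vertex not allowed to perform any force. An edge leak is an edge $xy$ across which no force may be performed (neither $x\to y$ nor $y\to x$). A specified leak is an ordered pair $x\to y$ meaning $x$ (the tail) may not force $y$ (the head). A leak is any of these three kinds. $B$ is a mixed $\ell$-leaky forcing set if for every set of at most $\ell$ leaks (of any mix of kinds), exhaustively applying the forcing rule from initial blue set $B$ subject to all the leaks colors all of $V(G)$ blue. For a set $L$ of leaks, $B^{[\infty]}_L$ denotes the set of blue vertices obtained from $B$ after exhaustively applying the forcing rule subject to the leaks in $L$ (independent of the order of forces). *)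

theory Defs
  imports Main
begin

definition simple_graph :: "'a set \<Rightarrow> ('a \<Rightarrow> 'a \<Rightarrow> bool) \<Rightarrow> bool" where
  "simple_graph V E \<longleftrightarrow> finite V \<and>
     (\<forall>x y. E x y \<longrightarrow> x \<in> V \<and> y \<in> V \<and> x \<noteq> y \<and> E y x)"

text \<open>Leaks: a vertex leak, an edge leak (an unordered edge, as a 2-element set),
  or a specified leak x \<rightarrow> y (x may not force y).\<close>
datatype 'a leak = VLeak 'a | ELeak "'a set" | SLeak 'a 'a

definition valid_leak :: "'a set \<Rightarrow> ('a \<Rightarrow> 'a \<Rightarrow> bool) \<Rightarrow> 'a leak \<Rightarrow> bool" where
  "valid_leak V E lk = (case lk of
      VLeak v \<Rightarrow> v \<in> V
    | ELeak e \<Rightarrow> (\<exists>x y. e = {x, y} \<and> E x y)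
    | SLeak x y \<Rightarrow> E x y)"

definition force_allowed :: "'a leak set \<Rightarrow> 'a \<Rightarrow> 'a \<Rightarrow> bool" where
  "force_allowed L u w \<longleftrightarrow>
     VLeak u \<notin> L \<and> ELeak {u, w} \<notin> L \<and> SLeak u w \<notin> L"

inductive_set closure :: "'a set \<Rightarrow> ('a \<Rightarrow> 'a \<Rightarrow> bool) \<Rightarrow> 'a leak set \<Rightarrow> 'a set \<Rightarrow> 'a set"
  for V E L B where
  base: "b \<in> B \<Longrightarrow> b \<in> closure V E L B"
| force: "\<lbrakk> u \<in> closure V E L B; E u w; force_allowed L u w;
            \<And>z. E u z \<Longrightarrow> z \<noteq> w \<Longrightarrow> z \<in> closure V E L B \<rbrakk>
          \<Longrightarrow> w \<in> closure V E L B"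

definition mixed_leaky_forcing_set ::
  "'a set \<Rightarrow> ('a \<Rightarrow> 'a \<Rightarrow> bool) \<Rightarrow> nat \<Rightarrow> 'a set \<Rightarrow> bool" where
  "mixed_leaky_forcing_set V E l B \<longleftrightarrow> B \<subseteq> V \<and>
     (\<forall>L. finite L \<and> card L \<le> l \<and> (\<forall>lk\<in>L. valid_leak V E lk) \<longrightarrow> closure V E L B = V)"

definition vertex_leaks_outside :: "'a leak set \<Rightarrow> 'a set \<Rightarrow> 'a set" where
  "vertex_leaks_outside L S = {v. VLeak v \<in> L} - S"

definition edge_leaks_outside :: "'a leak set \<Rightarrow> 'a set \<Rightarrow> 'a set set" where
  "edge_leaks_outside L S = {e. ELeak e \<in> L \<and> e \<inter> S = {}}"

definition spec_leaks_outside :: "'a leak set \<Rightarrow> 'a set \<Rightarrow> ('a \<times> 'a) set" where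
  "spec_leaks_outside L S = {(x, y). SLeak x y \<in> L \<and> x \<notin> S}"

end

theory Submission
  imports Defs
begin

definition outside :: "'a leak set \<Rightarrow> 'a set \<Rightarrow> 'a leak set" where
  "outside L C = {lk\<in>L. case lk of VLeak v \<Rightarrow> v \<notin> C | ELeak e \<Rightarrow> e \<inter> C = {}
      | SLeak x y \<Rightarrow> x \<notin> C}"

lemma closure_sub:
  assumes "x \<in> closure V E (L - outside L (closure V E L B)) B"
  shows "x \<in> closure V E L B"
  using assms
proof (induction rule: closure.induct)
  case (base b) then show ?case by (rule closure.base)
next
  case (force u w)
  have uC: "u \<in> closure V E L B" by (rule force.IH(1))
  have fa: "force_allowed (L - outside L (closure V E L B)) u w" by (rule force.hyps(3))
  have "force_allowed L u w"
    unfolding force_allowed_def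
  proof (intro conjI)
    show "VLeak u \<notin> L" using fa uC unfolding force_allowed_def outside_def by simp
    show "ELeak {u, w} \<notin> L" using fa uC unfolding force_allowed_def outside_def by simp
    show "SLeak u w \<notin> L" using fa uC unfolding force_allowed_def outside_def by simp
  qed
  moreover have zs: "\<And>z. E u z \<Longrightarrow> z \<noteq> w \<Longrightarrow> z \<in> closure V E L B"
    using force.IH(2) by simp
  ultimately show ?case using closure.force[OF uC force.hyps(2)] by blast
qed

lemma outside_decomp:
  "outside L C = VLeak ` vertex_leaks_outside L C \<union> ELeak ` edge_leaks_outside L C
     \<union> (\<lambda>(x,y). SLeak x y) ` spec_leaks_outside L C"
  unfolding outside_def vertex_leaks_outside_def edge_leaks_outside_def spec_leaks_outside_def
  apply (rule set_eqI)
  subgoal for lk by (cases lk) auto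
  done

theorem lemma4p1:
  fixes V :: "'a set" and E :: "'a \<Rightarrow> 'a \<Rightarrow> bool" and B :: "'a set"
    and L :: "'a leak set" and l k :: nat
  assumes "simple_graph V E"
    and "l \<ge> 1"
    and "mixed_leaky_forcing_set V E (l - 1) B"
    and "finite L" and "\<forall>lk\<in>L. valid_leak V E lk"
    and "card L = k" and "k \<ge> l"
  shows "card (vertex_leaks_outside L (closure V E L B))
       + card (edge_leaks_outside L (closure V E L B))
       + card (spec_leaks_outside L (closure V E L B)) \<le> k - l"
proof -
  define C where "C = closure V E L B"
  define Ot where "Ot = outside L C"
  define A1 where "A1 = vertex_leaks_outside L C"
  define A2 where "A2 = edge_leaks_outside L C"
  define A3 where "A3 = spec_leaks_outside L C"
  have OtL: "Ot \<subseteq> L" unfolding Ot_def outside_def by auto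
  have fOt: "finite Ot" using OtL assms(4) finite_subset by blast
  have Otd: "Ot = VLeak ` A1 \<union> ELeak ` A2 \<union> (\<lambda>(x,y). SLeak x y) ` A3"
    unfolding Ot_def A1_def A2_def A3_def by (rule outside_decomp)
  have i1: "inj_on VLeak A1" by (auto simp: inj_on_def)
  have i2: "inj_on ELeak A2" by (auto simp: inj_on_def)
  have i3: "inj_on (\<lambda>(x,y). SLeak x y) A3" by (auto simp: inj_on_def)
  have f1: "finite (VLeak ` A1)" and f2: "finite (ELeak ` A2)"
    and f3: "finite ((\<lambda>(x,y). SLeak x y) ` A3)" using fOt Otd by auto
  have "card Ot = card (VLeak ` A1) + card (ELeak ` A2) + card ((\<lambda>(x,y). SLeak x y) ` A3)"
  proof -
    have d1: "VLeak ` A1 \<inter> ELeak ` A2 = {}" by auto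
    have d2: "(VLeak ` A1 \<union> ELeak ` A2) \<inter> (\<lambda>(x,y). SLeak x y) ` A3 = {}" by auto
    have f12: "finite (VLeak ` A1 \<union> ELeak ` A2)" using f1 f2 by blast
    have e1: "card (VLeak ` A1 \<union> ELeak ` A2) = card (VLeak ` A1) + card (ELeak ` A2)"
      by (rule card_Un_disjoint[OF f1 f2 d1])
    have e2: "card ((VLeak ` A1 \<union> ELeak ` A2) \<union> (\<lambda>(x,y). SLeak x y) ` A3)
       = card (VLeak ` A1 \<union> ELeak ` A2) + card ((\<lambda>(x,y). SLeak x y) ` A3)"
      by (rule card_Un_disjoint[OF f12 f3 d2])
    show ?thesis unfolding Otd e2 e1 by (rule refl)
  qed
  also have "\<dots> = card A1 + card A2 + card A3"
    using i1 i2 i3 by (simp add: card_image)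
  finally have cOt: "card Ot = card A1 + card A2 + card A3" .
  have sub: "closure V E (L - Ot) B \<subseteq> C"
    unfolding Ot_def C_def by (rule subsetI, rule closure_sub)
  have "card (L - Ot) \<ge> l"
  proof (rule ccontr)
    assume "\<not> l \<le> card (L - Ot)"
    then have "card (L - Ot) \<le> l - 1" by simp
    moreover have "finite (L - Ot)" using assms(4) by simp
    moreover have "\<forall>lk\<in>L - Ot. valid_leak V E lk" using assms(5) by simp
    ultimately have "closure V E (L - Ot) B = V"
      using assms(3) unfolding mixed_leaky_forcing_set_def
      by (elim conjE allE[of _ "L - Ot"]) (erule mp, intro conjI)
    then have VC: "V \<subseteq> C" using sub by simp
    have "Ot = {}"
    proof (rule ccontr)
      assume "Ot \<noteq> {}"
      then obtain lk where lk: "lk \<in> Ot" by blast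
      then have "lk \<in> L" using OtL by auto
      then have vl: "valid_leak V E lk" using assms(5) by auto
      have EV: "\<And>x y. E x y \<Longrightarrow> x \<in> V"
        using assms(1) unfolding simple_graph_def by (elim conjE allE impE) simp_all
      show False
      proof (cases lk)
        case (VLeak v) then show ?thesis using lk vl VC
          unfolding Ot_def outside_def valid_leak_def by auto
      next
        case (ELeak e)
        then obtain x y where "e = {x,y}" "E x y" using vl unfolding valid_leak_def by auto
        then have "x \<in> C" using EV VC by blast
        then show ?thesis using lk ELeak \<open>e = {x,y}\<close>
          unfolding Ot_def outside_def by auto
      next
        case (SLeak x y)
        then have "x \<in> C" using vl EV VC unfolding valid_leak_def by auto
        then show ?thesis using lk SLeak
          unfolding Ot_def outside_def by auto
      qed
    qed
    then show False using \<open>card (L - Ot) \<le> l - 1\<close> assms by simp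
  qed
  moreover have "card (L - Ot) = k - card Ot" using assms(4,6) OtL fOt by (simp add: card_Diff_subset)
  moreover have "card Ot \<le> k" using assms(4,6) OtL card_mono by metis
  ultimately have "card Ot \<le> k - l" by linarith
  then have "card A1 + card A2 + card A3 \<le> k - l" using cOt by linarith
  then show ?thesis unfolding A1_def A2_def A3_def C_def .
qed

end
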